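(* For the compromise min-max regret shortest path problem, for any fixed $s$-$t$ path $x\in\mathcal{X}$, the number of changepoints of $reg(x,\cdot)$ is bounded by the number of extreme efficient solutions of the bicriteria shortest path problem $\min \{ (\sum_{e\in E: x_e = 1} 2\hat{c}_e y_e,\ \sum_{e\in E} \hat{c}_e y_e) : y\in\mathcal{X}\}$, i.e., $|\overline{\Lambda}(x)| \le |\mathcal{E}|$, where $\mathcal{E}$ is the set of those extreme efficient solutions (solutions obtainable as optima of weighted-sum scalarizations).
   Context: Let $G=(V,E)$ be a graph and $\mathcal{X}\subseteq\{0,1\}^{E}$ the set of (incidence vectors of) simple $s$-$t$ paths in $G$. Nominal edge costs $\hat{c}\ge 0$ are given, and for $\lambda\in[0,1]$ the uncertainty set is $\mathcal{U}(\lambda)=\prod_{e\in E}[(1-\lambda)\hat{c}_e,(1+\lambda)\hat{c}_e]$. For a fixed path $x$, the regret is $reg(x,\lambda)=\max_{c\in\mathcal{U}(\lambda)} \big(c^t x - \min_{y\in\mathcal{X}} c^t y\big)$, which is a piecewise linear function of $\lambda$; $\overline{\Lambda}(x)\subseteq[0,1]$ denotes its set of changepoints. One has $reg(x,\lambda)=\sum_{e: x_e=1}(1+\lambda)\hat{c}_e - \min_{y\in\mathcal{X}}\big(\lambda\sum_{e:x_e=1}2\hat{c}_e y_e + (1-\lambda)\sum_{e\in E}\hat{c}_e y_e\big)$ up to sign conventions of the rewriting, so the inner minimization is a weighted sum of the two objectives of the bicriteria problem above. The compromise problem is $\min_{x\in\mathcal{X}} \int_0^1 reg(x,\lambda)\,d\lambda$.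 *)

theory Defs
  imports "HOL-Analysis.Analysis"
begin

text \<open>Undirected graph: finite vertex set V, edges are 2-element vertex sets.
  A path is represented by its edge set (= incidence vector).\<close>

definition st_paths :: "'v set set \<Rightarrow> 'v \<Rightarrow> 'v \<Rightarrow> 'v set set set" where
  "st_paths E s t = {P. \<exists>vs. vs \<noteq> [] \<and> distinct vs \<and> hd vs = s \<and> last vs = t \<and>
      (\<forall>i < length vs - 1. {vs ! i, vs ! Suc i} \<in> E) \<and>
      P = {{vs ! i, vs ! Suc i} | i. i < length vs - 1}}"

definition path_cost :: "('e \<Rightarrow> real) \<Rightarrow> 'e set \<Rightarrow> real" where
  "path_cost c P = (\<Sum>e\<in>P. c e)"

definition unc_set :: "'e set \<Rightarrow> ('e \<Rightarrow> real) \<Rightarrow> real \<Rightarrow> ('e \<Rightarrow> real) set" where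
  "unc_set E ch l = {c. \<forall>e\<in>E. (1 - l) * ch e \<le> c e \<and> c e \<le> (1 + l) * ch e}"

definition regret :: "'e set \<Rightarrow> ('e \<Rightarrow> real) \<Rightarrow> 'e set set \<Rightarrow> 'e set \<Rightarrow> real \<Rightarrow> real" where
  "regret E ch X x l = (SUP c \<in> unc_set E ch l. path_cost c x - Min ((\<lambda>y. path_cost c y) ` X))"

text \<open>Changepoints of a piecewise linear function on [0,1]: interior points where
  the slope changes, i.e. where the function is not differentiable.\<close>
definition changepoints :: "(real \<Rightarrow> real) \<Rightarrow> real set" where
  "changepoints f = {l \<in> {0<..<1}. \<not> f differentiable (at l)}"

definition bicrit :: "('e \<Rightarrow> real) \<Rightarrow> 'e set \<Rightarrow> 'e set \<Rightarrow> real \<times> real" where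
  "bicrit ch x y = ((\<Sum>e\<in>x \<inter> y. 2 * ch e), (\<Sum>e\<in>y. ch e))"

definition efficient :: "('e \<Rightarrow> real) \<Rightarrow> 'e set \<Rightarrow> 'e set set \<Rightarrow> 'e set \<Rightarrow> bool" where
  "efficient ch x X y \<longleftrightarrow> y \<in> X \<and>
     \<not> (\<exists>y'\<in>X. fst (bicrit ch x y') \<le> fst (bicrit ch x y) \<and> snd (bicrit ch x y') \<le> snd (bicrit ch x y)
              \<and> bicrit ch x y' \<noteq> bicrit ch x y)"

text \<open>Extreme efficient solutions: efficient solutions whose image is an extreme point
  of conv(z(X)) + R^2_{\<ge>0} (exactly the solutions that are optima of weighted-sum
  scalarisations at extreme points of the nondominated frontier).\<close>
definition extreme_efficient :: "('e \<Rightarrow> real) \<Rightarrow> 'e set \<Rightarrow> 'e set set \<Rightarrow> 'e set set" where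
  "extreme_efficient ch x X = {y. efficient ch x X y \<and>
     (bicrit ch x y) extreme_point_of
       {p + q | p q. p \<in> convex hull (bicrit ch x ` X) \<and> fst q \<ge> 0 \<and> snd q \<ge> 0}}"

end

theory Submission
  imports Defs
begin


lemma crossing:
  fixes D S l t :: real
  assumes "D + l*S \<ge> 0" "D + t*S < 0"
  shows "S \<noteq> 0 \<and> D + (-D/S)*S = 0 \<and> \<bar>-D/S - l\<bar> < \<bar>t - l\<bar>"
proof -
  have S: "S \<noteq> 0" using assms by auto
  have e: "D + (-D/S)*S = 0" using S by (simp add: field_simps)
  have "\<bar>-D/S - l\<bar> < \<bar>t - l\<bar>"
  proof (cases "S > 0")
    case True
    then have "t < -D/S" "-D/S \<le> l" using assms by (simp_all add: field_simps)
    then show ?thesis by auto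
  next
    case False
    then have "S < 0" using S by auto
    then have "t > -D/S" "-D/S \<ge> l" using assms by (simp_all add: field_simps)
    then show ?thesis by auto
  qed
  with S e show ?thesis by blast
qed

lemma between_nonneg:
  fixes D S a b t :: real
  assumes "D + a*S \<ge> 0" "D + b*S \<ge> 0" "a \<le> t" "t \<le> b"
  shows "D + t*S \<ge> 0"
proof (cases "S \<ge> 0")
  case True
  then have "a*S \<le> t*S" using assms by (simp add: mult_right_mono)
  then show ?thesis using assms by linarith
next
  case False
  then have "b*S \<le> t*S" using assms by (simp add: mult_right_mono_neg)
  then show ?thesis using assms by linarith
qed

lemma local_diff:
  fixes R :: "real \<Rightarrow> real"
  assumes "\<And>t. t \<in> {u<..<v} \<Longrightarrow> R t = a + t*b" "l \<in> {u<..<v}"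
  shows "R differentiable (at l)"
proof -
  have "((\<lambda>t. a + t*b) has_derivative (\<lambda>h. h*b)) (at l)"
    by (auto intro!: derivative_eq_intros)
  then have "(R has_derivative (\<lambda>h. h*b)) (at l)"
    by (rule has_derivative_transform_within_open[where s="{u<..<v}"]) (use assms in auto)
  then show ?thesis unfolding differentiable_def by blast
qed

lemma abstract_cp:
  fixes X :: "'a set" and \<alpha> \<beta> :: "'a \<Rightarrow> real" and R :: "real \<Rightarrow> real" and Z :: "'a set"
  assumes finX: "finite X" and neX: "X \<noteq> {}"
    and Req: "\<And>t. t \<in> {0<..<1} \<Longrightarrow> R t = Max ((\<lambda>y. \<alpha> y + t * \<beta> y) ` X)"
    and Zc: "\<And>y m. y \<in> X \<Longrightarrow> m \<in> {0<..<1} \<Longrightarrow>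
        (\<forall>y'\<in>X. (\<alpha> y', \<beta> y') \<noteq> (\<alpha> y, \<beta> y) \<longrightarrow> \<alpha> y' + m*\<beta> y' < \<alpha> y + m*\<beta> y) \<Longrightarrow> y \<in> Z"
    and finZ: "finite Z"
  shows "finite (changepoints R) \<and> card (changepoints R) \<le> card Z"
proof -
  define h where "h y t = \<alpha> y + t * \<beta> y" for y t
  define K where "K = {t. \<exists>y\<in>X. \<exists>y'\<in>X. \<beta> y \<noteq> \<beta> y' \<and> h y t = h y' t}"
  have finK: "finite K"
  proof -
    have "K \<subseteq> (\<lambda>(y,y'). (\<alpha> y' - \<alpha> y) / (\<beta> y - \<beta> y')) ` (X \<times> X)"
    proof
      fix t assume "t \<in> K"
      then obtain y y' where yy: "y \<in> X" "y' \<in> X" "\<beta> y \<noteq> \<beta> y'" "h y t = h y' t"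
        unfolding K_def by blast
      then have "t = (\<alpha> y' - \<alpha> y) / (\<beta> y - \<beta> y')"
        unfolding h_def by (simp add: field_simps)
      with yy show "t \<in> (\<lambda>(y,y'). (\<alpha> y' - \<alpha> y) / (\<beta> y - \<beta> y')) ` (X \<times> X)" by force
    qed
    then show ?thesis using finite_subset finX by blast
  qed
  have argmax: "\<exists>y\<in>X. \<forall>y'\<in>X. h y' t \<le> h y t" for t
  proof -
    have "Max ((\<lambda>y. h y t) ` X) \<in> (\<lambda>y. h y t) ` X" using finX neX by (intro Max_in) auto
    then obtain y where "y \<in> X" "h y t = Max ((\<lambda>y. h y t) ` X)" by auto
    moreover have "\<forall>y'\<in>X. h y' t \<le> Max ((\<lambda>y. h y t) ` X)" using finX by auto
    ultimately show ?thesis by metis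
  qed
  have loc: "R differentiable (at l)"
    if "0 \<le> u" "v \<le> 1" "l \<in> {u<..<v}" "y \<in> X" "\<And>t y'. t \<in> {u<..<v} \<Longrightarrow> y' \<in> X \<Longrightarrow> h y' t \<le> h y t"
    for u v l y
  proof (rule local_diff[where u=u and v=v and a="\<alpha> y" and b="\<beta> y"])
    fix t assume t: "t \<in> {u<..<v}"
    then have "R t = Max ((\<lambda>y. h y t) ` X)" using Req[of t] that unfolding h_def by auto
    also have "\<dots> = h y t" using that t finX by (intro Max_eqI) auto
    finally show "R t = \<alpha> y + t * \<beta> y" unfolding h_def .
  qed (use that in auto)
  have CK: "changepoints R \<subseteq> K"
  proof
    fix l assume lC: "l \<in> changepoints R"
    then have l01: "l \<in> {0<..<1}" and nd: "\<not> R differentiable (at l)" unfolding changepoints_def by auto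
    show "l \<in> K"
    proof (rule ccontr)
      assume lK: "l \<notin> K"
      obtain y0 where y0: "y0 \<in> X" "\<forall>y'\<in>X. h y' l \<le> h y0 l" using argmax by blast
      define \<delta> where "\<delta> = Min (insert l (insert (1-l) ((\<lambda>k. \<bar>k - l\<bar>) ` K)))"
      have \<delta>pos: "\<delta> > 0" unfolding \<delta>_def using finK l01 lK by (subst Min_gr_iff) auto
      have finS: "finite (insert l (insert (1-l) ((\<lambda>k. \<bar>k - l\<bar>) ` K)))" using finK by auto
      have d1: "\<delta> \<le> l" unfolding \<delta>_def by (rule Min_le[OF finS]) simp
      have d2: "\<delta> \<le> 1 - l" unfolding \<delta>_def by (rule Min_le[OF finS]) simp
      have d3: "\<delta> \<le> \<bar>k - l\<bar>" if "k \<in> K" for k unfolding \<delta>_def by (rule Min_le[OF finS]) (use that in simp)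
      note \<delta>le = d1 d2 d3
      have "R differentiable (at l)"
      proof (rule loc[where u="l-\<delta>" and v="l+\<delta>" and y=y0])
        fix t y' assume t: "t \<in> {l-\<delta><..<l+\<delta>}" and y': "y' \<in> X"
        show "h y' t \<le> h y0 t"
        proof (rule ccontr)
          assume "\<not> h y' t \<le> h y0 t"
          then have a: "(\<alpha> y0 - \<alpha> y') + t*(\<beta> y0 - \<beta> y') < 0" unfolding h_def by (simp add: algebra_simps)
          have b: "(\<alpha> y0 - \<alpha> y') + l*(\<beta> y0 - \<beta> y') \<ge> 0" using y0 y' unfolding h_def by (simp add: algebra_simps)
          define ts where "ts = -(\<alpha> y0 - \<alpha> y') / (\<beta> y0 - \<beta> y')"
          from crossing[OF b a] have c: "\<beta> y0 - \<beta> y' \<noteq> 0"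
              "(\<alpha> y0 - \<alpha> y') + ts*(\<beta> y0 - \<beta> y') = 0" "\<bar>ts - l\<bar> < \<bar>t - l\<bar>"
            unfolding ts_def by auto
          have "ts \<in> K" unfolding K_def h_def using c y0(1) y'
            by (intro CollectI bexI[of _ y0] bexI[of _ y']) (auto simp: algebra_simps)
          then have "\<delta> \<le> \<bar>ts - l\<bar>" by (rule \<delta>le)
          moreover have "\<bar>t - l\<bar> < \<delta>" using t by auto
          ultimately show False using c by linarith
        qed
      qed (use \<delta>pos \<delta>le y0 in auto)
      with nd show False by blast
    qed
  qed
  have finC: "finite (changepoints R)" using CK finK finite_subset by blast
  define r where "r l = Min (insert 1 {k\<in>K. l < k})" for l
  define m where "m l = (l + r l) / 2" for l
  define \<phi> where "\<phi> l = (SOME y. y \<in> X \<and> (\<forall>y'\<in>X. h y' (m l) \<le> h y (m l)))" for l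
  have finKl: "finite (insert 1 {k\<in>K. l < k})" for l using finK by auto
  have rprops: "l < r l" "r l \<le> 1" "\<And>k. k \<in> K \<Longrightarrow> l < k \<Longrightarrow> r l \<le> k" if "l < 1" for l
  proof -
    show "l < r l" unfolding r_def by (subst Min_gr_iff[OF finKl]) (use that in auto)
    show "r l \<le> 1" unfolding r_def by (rule Min_le[OF finKl]) simp
    show "r l \<le> k" if "k \<in> K" "l < k" for k unfolding r_def by (rule Min_le[OF finKl]) (use that in simp)
  qed
  have \<phi>: "\<phi> l \<in> X \<and> (\<forall>y'\<in>X. h y' (m l) \<le> h (\<phi> l) (m l))" for l
  proof -
    obtain y where "y \<in> X" "\<forall>y'\<in>X. h y' (m l) \<le> h y (m l)" using argmax[of "m l"] by blast
    then show ?thesis unfolding \<phi>_def by (rule someI2[where Q="\<lambda>y. y \<in> X \<and> (\<forall>y'\<in>X. h y' (m l) \<le> h y (m l))", OF conjI])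
  qed
  have mK: "m l \<notin> K" "l < m l" "m l < r l" if "l < 1" for l
  proof -
    show "l < m l" "m l < r l" using rprops[OF that] unfolding m_def by auto
    then show "m l \<notin> K" using rprops(3)[OF that, of "m l"] by linarith
  qed
  have \<phi>Z: "\<phi> l \<in> Z" if "l \<in> changepoints R" for l
  proof -
    have l01: "0 < l" "l < 1" using that unfolding changepoints_def by auto
    have m01: "m l \<in> {0<..<1}" using mK[OF l01(2)] rprops[OF l01(2)] l01 by auto
    show ?thesis
    proof (rule Zc[OF conjunct1[OF \<phi>] m01], intro ballI impI)
      fix y' assume y': "y' \<in> X" and ne: "(\<alpha> y', \<beta> y') \<noteq> (\<alpha> (\<phi> l), \<beta> (\<phi> l))"
      have le: "h y' (m l) \<le> h (\<phi> l) (m l)" using \<phi> y' by blast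
      show "\<alpha> y' + m l * \<beta> y' < \<alpha> (\<phi> l) + m l * \<beta> (\<phi> l)"
      proof (rule ccontr)
        assume "\<not> ?thesis"
        then have eq: "h y' (m l) = h (\<phi> l) (m l)" using le unfolding h_def by auto
        have "\<beta> y' = \<beta> (\<phi> l)" using mK(1)[OF l01(2)] eq y' \<phi> unfolding K_def by blast
        then have "\<alpha> y' = \<alpha> (\<phi> l)" using eq unfolding h_def by auto
        with ne \<open>\<beta> y' = \<beta> (\<phi> l)\<close> show False by auto
      qed
    qed
  qed
  have neq: "\<phi> l1 \<noteq> \<phi> l2" if "l1 \<in> changepoints R" "l2 \<in> changepoints R" "l1 < l2" for l1 l2
  proof
    assume same: "\<phi> l1 = \<phi> l2"
    have l1: "0 < l1" "l1 < 1" and l2: "0 < l2" "l2 < 1" and nd: "\<not> R differentiable (at l2)"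
      using that unfolding changepoints_def by auto
    have "l2 \<in> K" using that CK by auto
    then have m1l2: "m l1 < l2" using rprops(3)[OF l1(2) \<open>l2 \<in> K\<close> \<open>l1 < l2\<close>] mK[OF l1(2)] by linarith
    have l2m2: "l2 < m l2" using mK[OF l2(2)] by auto
    have m2: "m l2 \<le> 1" using mK[OF l2(2)] rprops[OF l2(2)] by auto
    have m1: "0 \<le> m l1" using mK[OF l1(2)] l1 by auto
    have "R differentiable (at l2)"
    proof (rule loc[where u="m l1" and v="m l2" and y="\<phi> l2"])
      fix t y' assume t: "t \<in> {m l1<..<m l2}" and y': "y' \<in> X"
      have a: "(\<alpha> (\<phi> l2) - \<alpha> y') + m l1*(\<beta> (\<phi> l2) - \<beta> y') \<ge> 0"
        using \<phi>[of l1] y' same unfolding h_def by (simp add: algebra_simps)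
      have b: "(\<alpha> (\<phi> l2) - \<alpha> y') + m l2*(\<beta> (\<phi> l2) - \<beta> y') \<ge> 0"
        using \<phi>[of l2] y' unfolding h_def by (simp add: algebra_simps)
      have "(\<alpha> (\<phi> l2) - \<alpha> y') + t*(\<beta> (\<phi> l2) - \<beta> y') \<ge> 0"
        by (rule between_nonneg[OF a b]) (use t in auto)
      then show "h y' t \<le> h (\<phi> l2) t" unfolding h_def by (simp add: algebra_simps)
    qed (use m1 m2 m1l2 l2m2 \<phi> in auto)
    with nd show False by blast
  qed
  have inj: "inj_on \<phi> (changepoints R)"
    unfolding inj_on_def by (metis neq linorder_neq_iff)
  have "card (changepoints R) \<le> card Z"
    by (rule card_inj_on_le[OF inj _ finZ]) (use \<phi>Z in auto)
  with finC show ?thesis by blast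
qed



lemma hull_min:
  fixes Z :: "(real \<times> real) set" and m :: real
  defines "L \<equiv> \<lambda>p::real\<times>real. m * fst p + (1-m) * snd p"
  assumes finZ: "finite Z" and zZ: "z \<in> Z"
    and strict: "\<And>z'. z' \<in> Z \<Longrightarrow> z' \<noteq> z \<Longrightarrow> L z < L z'"
    and p: "p \<in> convex hull Z"
  shows "L z \<le> L p \<and> (L p = L z \<longrightarrow> p = z)"
proof -
  obtain u where u: "\<forall>x\<in>Z. 0 \<le> u x" "sum u Z = 1" "(\<Sum>x\<in>Z. u x *\<^sub>R x) = p"
    using p unfolding convex_hull_finite[OF finZ] by blast
  have Lp: "L p = (\<Sum>x\<in>Z. u x * L x)"
    unfolding L_def u(3)[symmetric] fst_sum snd_sum sum_distrib_left sum.distrib[symmetric]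
    by (rule sum.cong) (auto simp: algebra_simps)
  have "L p - L z = (\<Sum>x\<in>Z. u x * (L x - L z))"
    using Lp u(2) by (simp add: right_diff_distrib sum_subtractf sum_distrib_right[symmetric])
  moreover have nn: "\<forall>x\<in>Z. 0 \<le> u x * (L x - L z)"
  proof
    fix x assume x: "x \<in> Z"
    have "L z \<le> L x" using strict[OF x] by (cases "x = z") (auto simp: less_imp_le)
    then show "0 \<le> u x * (L x - L z)" using u(1) x by simp
  qed
  moreover have "0 \<le> (\<Sum>x\<in>Z. u x * (L x - L z))" by (rule sum_nonneg) (use nn in blast)
  ultimately have le: "L z \<le> L p" by linarith
  have "p = z" if eq: "L p = L z"
  proof -
    have S0: "(\<Sum>x\<in>Z. u x * (L x - L z)) = 0" using \<open>L p - L z = _\<close> eq by simp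
    have "\<forall>x\<in>Z. u x * (L x - L z) = 0"
      by (rule iffD1[OF sum_nonneg_eq_0_iff[OF finZ] S0]) (use nn in blast)
    then have u0: "\<forall>x\<in>Z - {z}. u x = 0"
    proof (intro ballI)
      fix x assume x: "x \<in> Z - {z}" and h: "\<forall>x\<in>Z. u x * (L x - L z) = 0"
      have "L x - L z > 0" using strict x by simp
      moreover have "u x * (L x - L z) = 0" using h x by blast
      ultimately show "u x = 0" by simp
    qed
    have "sum u Z = u z + sum u (Z - {z})" by (rule sum.remove[OF finZ zZ])
    then have uz: "u z = 1" using u0 u(2) by simp
    have "(\<Sum>x\<in>Z. u x *\<^sub>R x) = u z *\<^sub>R z + (\<Sum>x\<in>Z - {z}. u x *\<^sub>R x)"
      by (rule sum.remove[OF finZ zZ])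
    then show "p = z" using u0 uz u(3) by simp
  qed
  with le show ?thesis by blast
qed

lemma geom:
  fixes Z :: "(real \<times> real) set" and m :: real
  assumes finZ: "finite Z" and zZ: "z \<in> Z" and m: "0 < m" "m < 1"
    and strict: "\<And>z'. z' \<in> Z \<Longrightarrow> z' \<noteq> z \<Longrightarrow> m * fst z + (1-m) * snd z < m * fst z' + (1-m) * snd z'"
  shows "z extreme_point_of {p + q | p q. p \<in> convex hull Z \<and> fst q \<ge> 0 \<and> snd q \<ge> 0}"
proof -
  define L where "L = (\<lambda>p::real\<times>real. m * fst p + (1-m) * snd p)"
  define S where "S = {p + q | p q. p \<in> convex hull Z \<and> fst q \<ge> 0 \<and> snd q \<ge> 0}"
  have HM: "L z \<le> L p \<and> (L p = L z \<longrightarrow> p = z)" if "p \<in> convex hull Z" for p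
    unfolding L_def by (rule hull_min[OF finZ zZ _ that]) (use strict in auto)
  have SM: "L z \<le> L a \<and> (L a = L z \<longrightarrow> a = z)" if aS: "a \<in> S" for a
  proof -
    obtain p q where a: "a = p + q" "p \<in> convex hull Z" "fst q \<ge> 0" "snd q \<ge> 0"
      using aS unfolding S_def by blast
    have Lq: "L q \<ge> 0" unfolding L_def using a m by simp
    have La: "L a = L p + L q" unfolding L_def a by (simp add: algebra_simps)
    have "L a = L z \<longrightarrow> a = z"
    proof
      assume "L a = L z"
      then have "L q = 0" "L p = L z" using HM[OF a(2)] Lq La by auto
      moreover have "m * fst q \<ge> 0" "(1-m) * snd q \<ge> 0" using a(3,4) m by simp_all
      ultimately have "m * fst q = 0" "(1-m) * snd q = 0" unfolding L_def by linarith+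
      then have "fst q = 0" "snd q = 0" using m by simp_all
      then have "q = 0" by (simp add: prod_eq_iff)
      then show "a = z" using HM[OF a(2)] \<open>L p = L z\<close> a by simp
    qed
    then show ?thesis using HM[OF a(2)] Lq La by simp
  qed
  have zS: "z \<in> S" unfolding S_def
    by (rule CollectI, rule exI[of _ z], rule exI[of _ 0]) (simp add: hull_inc zZ)
  show ?thesis unfolding S_def[symmetric] extreme_point_of_def
  proof (intro conjI zS ballI)
    fix a b assume ab: "a \<in> S" "b \<in> S"
    show "z \<notin> open_segment a b"
    proof
      assume "z \<in> open_segment a b"
      then obtain u where u: "a \<noteq> b" "0 < u" "u < 1" "z = (1 - u) *\<^sub>R a + u *\<^sub>R b"
        unfolding in_segment by blast
      have Lz: "L z = (1-u) * L a + u * L b" unfolding L_def u(4) by (simp add: algebra_simps)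
      have "L a \<ge> L z" "L b \<ge> L z" using SM ab by auto
      moreover have "(1-u) * (L a - L z) \<ge> 0" "u * (L b - L z) \<ge> 0"
        using calculation u(2,3) by simp_all
      moreover have "(1-u) * (L a - L z) + u * (L b - L z) = 0"
        using Lz by (simp add: algebra_simps)
      ultimately have "(1-u) * (L a - L z) = 0" "u * (L b - L z) = 0" by linarith+
      then have "L a = L z" "L b = L z" using u(2,3) by simp_all
      then have "a = z" "b = z" using SM ab by auto
      with u(1) show False by simp
    qed
  qed
qed



lemma paths_sub:
  assumes "y \<in> st_paths E s t" shows "y \<subseteq> E"
  using assms unfolding st_paths_def by auto

lemma diff_decomp:
  fixes c :: "'e \<Rightarrow> real"
  assumes "finite x" "finite y"
  shows "sum c x - sum c y = sum c (x - y) - sum c (y - x)"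
proof -
  have "sum c x = sum c (x \<inter> y) + sum c (x - y)" using sum.Int_Diff[OF assms(1)] by blast
  moreover have "sum c y = sum c (y \<inter> x) + sum c (y - x)" using sum.Int_Diff[OF assms(2)] by blast
  ultimately show ?thesis by (simp add: Int_commute)
qed

lemma regret_formula:
  fixes E :: "'e set" and ch :: "'e \<Rightarrow> real" and X :: "'e set set"
  assumes finE: "finite E" and finX: "finite X" and neX: "X \<noteq> {}"
    and subX: "\<And>y. y \<in> X \<Longrightarrow> y \<subseteq> E" and xE: "x \<subseteq> E"
    and chpos: "\<forall>e\<in>E. ch e \<ge> 0" and t: "0 \<le> t"
  shows "regret E ch X x t = Max ((\<lambda>y. (sum ch (x - y) - sum ch (y - x)) + t * (sum ch (x - y) + sum ch (y - x))) ` X)"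
proof -
  define h where "h y = (sum ch (x - y) - sum ch (y - x)) + t * (sum ch (x - y) + sum ch (y - x))" for y
  define G where "G = Max (h ` X)"
  define F where "F c = path_cost c x - Min ((\<lambda>y. path_cost c y) ` X)" for c :: "'e \<Rightarrow> real"
  have finx: "finite x" using xE finE finite_subset by blast
  have finy: "finite y" if "y \<in> X" for y using subX[OF that] finE finite_subset by blast
  have hG: "h y \<le> G" if "y \<in> X" for y unfolding G_def using finX that by auto
  have hform: "h y = (1+t) * sum ch (x - y) - (1-t) * sum ch (y - x)" for y
    unfolding h_def by (simp add: algebra_simps)
  have upper: "F c \<le> G" if c: "c \<in> unc_set E ch t" for c
  proof -
    have "Min ((\<lambda>y. path_cost c y) ` X) \<in> (\<lambda>y. path_cost c y) ` X" using finX neX by (intro Min_in) auto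
    then obtain y where y: "y \<in> X" "Min ((\<lambda>y. path_cost c y) ` X) = path_cost c y" by auto
    have 1: "F c = sum c (x - y) - sum c (y - x)"
      unfolding F_def y(2) path_cost_def using diff_decomp[OF finx finy[OF y(1)]] by simp
    have 2: "sum c (x - y) \<le> sum (\<lambda>e. (1+t) * ch e) (x - y)"
      by (rule sum_mono) (use c xE in \<open>auto simp: unc_set_def\<close>)
    have 3: "sum (\<lambda>e. (1-t) * ch e) (y - x) \<le> sum c (y - x)"
      by (rule sum_mono) (use c subX[OF y(1)] in \<open>auto simp: unc_set_def\<close>)
    have 4: "sum (\<lambda>e. (1+t) * ch e) (x - y) - sum (\<lambda>e. (1-t) * ch e) (y - x) = h y"
      unfolding hform by (simp add: sum_distrib_left)
    show ?thesis using 1 2 3 4 hG[OF y(1)] by linarith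
  qed
  define cs where "cs e = (if e \<in> x then (1+t) * ch e else (1-t) * ch e)" for e
  have csU: "cs \<in> unc_set E ch t"
    unfolding unc_set_def cs_def using chpos t by (auto simp: mult_right_mono)
  have "G \<in> h ` X" unfolding G_def using finX neX by (intro Max_in) auto
  then obtain y0 where y0: "y0 \<in> X" "G = h y0" by auto
  have "Min ((\<lambda>y. path_cost cs y) ` X) \<le> path_cost cs y0" using finX y0(1) by auto
  then have "F cs \<ge> path_cost cs x - path_cost cs y0" unfolding F_def by linarith
  also have "path_cost cs x - path_cost cs y0 = sum cs (x - y0) - sum cs (y0 - x)"
    unfolding path_cost_def by (rule diff_decomp[OF finx finy[OF y0(1)]])
  also have "sum cs (x - y0) = sum (\<lambda>e. (1+t) * ch e) (x - y0)" by (rule sum.cong) (auto simp: cs_def)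
  also have "sum cs (y0 - x) = sum (\<lambda>e. (1-t) * ch e) (y0 - x)" by (rule sum.cong) (auto simp: cs_def)
  also have "sum (\<lambda>e. (1+t) * ch e) (x - y0) - sum (\<lambda>e. (1-t) * ch e) (y0 - x) = G"
    unfolding y0(2) hform by (simp add: sum_distrib_left)
  finally have "G \<le> F cs" .
  with upper[OF csU] have FG: "F cs = G" by linarith
  have "regret E ch X x t = Sup (F ` unc_set E ch t)" unfolding regret_def F_def by simp
  also have "\<dots> = G"
    by (rule cSup_eq_maximum) (use FG csU upper in auto)
  finally show ?thesis unfolding G_def h_def .
qed


theorem lemma2:
  fixes V :: "'v set" and E :: "'v set set" and s t :: 'v
    and ch :: "'v set \<Rightarrow> real" and x :: "'v set set"
  assumes "finite V"
    and "E \<subseteq> {{u, v} | u v. u \<in> V \<and> v \<in> V \<and> u \<noteq> v}"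
    and "s \<in> V" and "t \<in> V"
    and "\<forall>e\<in>E. ch e \<ge> 0"
    and "x \<in> st_paths E s t"
  shows "finite (changepoints (regret E ch (st_paths E s t) x))
       \<and> card (changepoints (regret E ch (st_paths E s t) x))
           \<le> card (extreme_efficient ch x (st_paths E s t))"
proof -
  define X where "X = st_paths E s t"
  define \<alpha> where "\<alpha> y = sum ch (x - y) - sum ch (y - x)" for y
  define \<beta> where "\<beta> y = sum ch (x - y) + sum ch (y - x)" for y
  define P where "P = bicrit ch x"
  define C where "C = sum ch x"
  have "E \<subseteq> Pow V"
  proof
    fix e assume "e \<in> E"
    then obtain u v where "e = {u, v}" "u \<in> V" "v \<in> V" using assms(2) by blast
    then show "e \<in> Pow V" by simp
  qed
  moreover have "finite (Pow V)" using assms(1) by simp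
  ultimately have finE: "finite E" by (rule finite_subset)
  have subX: "y \<subseteq> E" if "y \<in> X" for y using that unfolding X_def by (rule paths_sub)
  have "X \<subseteq> Pow E" using subX by blast
  moreover have "finite (Pow E)" using finE by simp
  ultimately have finX: "finite X" by (rule finite_subset)
  have xX: "x \<in> X" using assms(6) unfolding X_def .
  have xE: "x \<subseteq> E" using subX xX .
  have finx: "finite x" using xE finE finite_subset by blast
  have finy: "finite y" if "y \<in> X" for y using subX[OF that] finE finite_subset by blast
  have keyid: "\<alpha> y = C - snd (P y) \<and> \<beta> y = C - fst (P y) + snd (P y)" if y: "y \<in> X" for y
  proof -
    have f: "fst (P y) = 2 * sum ch (x \<inter> y)" unfolding P_def bicrit_def by (simp add: sum_distrib_left)
    have sn: "snd (P y) = sum ch y" unfolding P_def bicrit_def by simp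
    have "sum ch x = sum ch (x \<inter> y) + sum ch (x - y)" using sum.Int_Diff[OF finx] by blast
    moreover have "sum ch y = sum ch (y \<inter> x) + sum ch (y - x)" using sum.Int_Diff[OF finy[OF y]] by blast
    ultimately show ?thesis unfolding \<alpha>_def \<beta>_def C_def f sn by (simp add: Int_commute)
  qed
  have Lid: "m * fst (P y) + (1-m) * snd (P y) = (1+m) * C - (\<alpha> y + m * \<beta> y)" if "y \<in> X" for y m
  proof -
    have a: "\<alpha> y = C - snd (P y)" and b: "\<beta> y = C - fst (P y) + snd (P y)" using keyid[OF that] by auto
    show ?thesis unfolding a b by (simp add: algebra_simps)
  qed
  have res: "finite (changepoints (regret E ch X x)) \<and> card (changepoints (regret E ch X x)) \<le> card (extreme_efficient ch x X)"
  proof (rule abstract_cp[where \<alpha>=\<alpha> and \<beta>=\<beta>, OF finX])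
    show "X \<noteq> {}" using xX by blast
    show "regret E ch X x l = Max ((\<lambda>y. \<alpha> y + l * \<beta> y) ` X)" if "l \<in> {0<..<1}" for l
      unfolding \<alpha>_def \<beta>_def
      by (rule regret_formula[OF finE finX _ subX xE assms(5)]) (use that xX in auto)
    show "finite (extreme_efficient ch x X)"
      by (rule finite_subset[OF _ finX]) (auto simp: extreme_efficient_def efficient_def)
  next
    fix y m assume y: "y \<in> X" and m: "m \<in> {0<..<1}"
      and strict: "\<forall>y'\<in>X. (\<alpha> y', \<beta> y') \<noteq> (\<alpha> y, \<beta> y) \<longrightarrow> \<alpha> y' + m * \<beta> y' < \<alpha> y + m * \<beta> y"
    have strictP: "m * fst (P y) + (1-m) * snd (P y) < m * fst (P y') + (1-m) * snd (P y')"
      if y': "y' \<in> X" "P y' \<noteq> P y" for y'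
    proof -
      have "(\<alpha> y', \<beta> y') \<noteq> (\<alpha> y, \<beta> y)"
      proof
        assume "(\<alpha> y', \<beta> y') = (\<alpha> y, \<beta> y)"
        then have "snd (P y') = snd (P y)" "fst (P y') = fst (P y)" using keyid[OF y] keyid[OF y'(1)] by auto
        then show False using y'(2) by (simp add: prod_eq_iff)
      qed
      then have "\<alpha> y' + m * \<beta> y' < \<alpha> y + m * \<beta> y" using strict y' by blast
      then show ?thesis using Lid[OF y, of m] Lid[OF y'(1), of m] by linarith
    qed
    have m01: "0 < m" "m < 1" using m by auto
    have ext: "P y extreme_point_of {p + q | p q. p \<in> convex hull (P ` X) \<and> fst q \<ge> 0 \<and> snd q \<ge> 0}"
    proof (rule geom[OF _ _ m01])
      show "finite (P ` X)" using finX by simp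
      show "P y \<in> P ` X" using y by simp
      fix z' assume "z' \<in> P ` X" "z' \<noteq> P y"
      then obtain y' where y': "y' \<in> X" "z' = P y'" by auto
      show "m * fst (P y) + (1-m) * snd (P y) < m * fst z' + (1-m) * snd z'"
        using strictP[OF y'(1)] \<open>z' \<noteq> P y\<close> unfolding y'(2) by simp
    qed
    have eff: "efficient ch x X y"
      unfolding efficient_def
    proof (intro conjI y notI)
      assume "\<exists>y'\<in>X. fst (bicrit ch x y') \<le> fst (bicrit ch x y) \<and> snd (bicrit ch x y') \<le> snd (bicrit ch x y) \<and> bicrit ch x y' \<noteq> bicrit ch x y"
      then have "\<exists>y'\<in>X. fst (P y') \<le> fst (P y) \<and> snd (P y') \<le> snd (P y) \<and> P y' \<noteq> P y"
        unfolding P_def .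
      then obtain y' where y': "y' \<in> X" "fst (P y') \<le> fst (P y)" "snd (P y') \<le> snd (P y)" "P y' \<noteq> P y"
        by blast
      have "m * fst (P y') \<le> m * fst (P y)" "(1-m) * snd (P y') \<le> (1-m) * snd (P y)"
        using y' m01 by (simp_all add: mult_left_mono)
      then show False using strictP[OF y'(1,4)] by linarith
    qed
    show "y \<in> extreme_efficient ch x X"
      unfolding extreme_efficient_def using eff ext[unfolded P_def] by (intro CollectI conjI)
  qed
  then show ?thesis unfolding X_def .
qed

end
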